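(* Let $\mathcal K'$ be a tame shrinking of a tame topological Kuranishi atlas $\mathcal K$, with domains $U'_I\subset U_I$. Then the map $\iota:|\mathcal K'|\to|\mathcal K|$ induced by the inclusions $U'_I\hookrightarrow U_I$ (i.e. $\pi_{\mathcal K'}(I,x)\mapsto\pi_{\mathcal K}(I,x)$) is well defined and injective.
   Context: Notation: for subsets $V'\subset V$ of a topological space, $V'\sqsubset V$ means the closure of $V'$ in $V$ is compact. $X$ is a compact metrizable space. Charts: a topological Kuranishi chart for $X$ with open footprint $F\subset X$ is a tuple $\mathbf K=(U,\mathbb E,\mathfrak s,\psi)$ where $U$ is a separable, locally compact, metrizable space; $\mathbb E$ is a separable, locally compact, metrizable space with continuous maps $\mathrm{pr}:\mathbb E\to U$ and $0:U\to\mathbb E$ with $\mathrm{pr}\circ0=\mathrm{id}_U$; $\mathfrak s:U\to\mathbb E$ is continuous with $\mathrm{pr}\circ\mathfrak s=\mathrm{id}_U$; and $\psi$ is a homeomorphism from $\mathfrak s^{-1}(0):=\{x\in U:\mathfrak s(x)=0(x)\}$ onto $F$. For open $U'\subset U$ the restriction is $\mathbf K|_{U'}:=(U',\mathrm{pr}^{-1}(U'),\mathfrak s|_{U'},\psi|_{U'\cap\mathfrak s^{-1}(0)})$. Coordinate changes: for charts $\mathbf K_I,\mathbf K_J$ with $F_I\cap F_J\neq\emptyset$, a coordinate change $\widehat\Phi_{IJ}:\mathbf K_I\to\mathbf K_J$ consists of an open set $U_{IJ}\subset U_I$ with $U_{IJ}\cap\mathfrak s_I^{-1}(0_I)=\psi_I^{-1}(F_I\cap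 F_J)$ and a topological embedding $\widehat\Phi_{IJ}:\mathrm{pr}_I^{-1}(U_{IJ})\to\mathbb E_J$ such that there is a topological embedding $\phi_{IJ}:U_{IJ}\to U_J$ with $\mathrm{pr}_J\circ\widehat\Phi_{IJ}=\phi_{IJ}\circ\mathrm{pr}_I$, $0_J\circ\phi_{IJ}=\widehat\Phi_{IJ}\circ0_I$ and $\mathfrak s_J\circ\phi_{IJ}=\widehat\Phi_{IJ}\circ\mathfrak s_I$ on $U_{IJ}$, and $\phi_{IJ}=\psi_J^{-1}\circ\psi_I$ on $U_{IJ}\cap\mathfrak s_I^{-1}(0_I)$. Atlases: a covering family of basic charts is a finite family $(\mathbf K_i)_{i=1,\dots,N}$ of charts whose footprints cover $X$; $\mathcal I_{\mathcal K}$ is the set of nonempty $I\subset\{1,\dots,N\}$ with $F_I:=\bigcap_{i\in I}F_i\neq\emptyset$. Transition data consist of a chart $\mathbf K_J$ with footprint $F_J$ for each $J\in\mathcal I_{\mathcal K}$ with $|J|\ge2$ (and $\mathbf K_{\{i\}}:=\mathbf K_i$), and a coordinate change $\widehat\Phi_{IJ}:\mathbf K_I\to\mathbf K_J$ for all $I\subsetneq J$ in $\mathcal I_{\mathcal K}$. We set $U_{II}:=U_I$, $\phi_{II}:=\mathrm{id}_{U_I}$. For $I\subsetneq J\subsetneq K$ let $U_{IJK}:=U_{IJ}\cap\phi_{IJ}^{-1}(U_{JK})$. The triple satisfies the weak cocycle condition if $\widehat\Phi_{JK}\circ\widehat\Phi_{IJ}=\widehat\Phi_{IK}$ on $\mathrm{pr}_I^{-1}(U_{IJK}\cap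 U_{IK})$; the cocycle condition if in addition $U_{IJK}\subset U_{IK}$; the strong cocycle condition if in addition $U_{IJK}=U_{IK}$. A weak topological Kuranishi atlas $\mathcal K$ is a covering family with transition data satisfying the weak cocycle condition for all such triples; a topological Kuranishi atlas is one satisfying the cocycle condition for all triples. Filtrations: a weak topological Kuranishi atlas is filtered if it is equipped with closed subsets $\mathbb E_{IJ}\subset\mathbb E_J$ for all $J\in\mathcal I_{\mathcal K}$ and $I\subset J$ (including $I=\emptyset$) such that (i) $\mathbb E_{JJ}=\mathbb E_J$ and $\mathbb E_{\emptyset J}=\mathrm{im}\,0_J$; (ii) $\widehat\Phi_{JK}(\mathrm{pr}_J^{-1}(U_{JK})\cap\mathbb E_{IJ})=\mathbb E_{IK}\cap\mathrm{pr}_K^{-1}(\mathrm{im}\,\phi_{JK})$ for $I\subset J\subsetneq K$; (iii) $\mathbb E_{IJ}\cap\mathbb E_{HJ}=\mathbb E_{(I\cap H)J}$ for $I,H\subset J$; (iv) $\mathrm{im}\,\phi_{IJ}$ is an open subset of $\mathfrak s_J^{-1}(\mathbb E_{IJ})$ for $I\subsetneq J$. Tameness: a filtered weak topological Kuranishi atlas is tame if $U_{IJ}\cap U_{IK}=U_{I(J\cup K)}$ for all $I,J,K\in\mathcal I_{\mathcal K}$ with $I\subset J,K$ (where $U_{IL}:=\emptyset$ if $L\notin\mathcal I_{\mathcal K}$), and $\phi_{IJ}(U_{IK})=U_{JK}\cap\mathfrak s_J^{-1}(\mathbb E_{IJ})$ for all $I\subset J\subset K$ in $\mathcal I_{\mathcal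 K}$ (equalities of indices allowed). Virtual neighbourhood: for a topological Kuranishi atlas, $|\mathcal K|$ is the quotient of $\bigsqcup_{I\in\mathcal I_{\mathcal K}}U_I=\{(I,x):x\in U_I\}$ by the equivalence relation generated by $(I,x)\sim(J,\phi_{IJ}(x))$ for $I\subset J$, $x\in U_{IJ}$, with the quotient topology and projection $\pi_{\mathcal K}$. Shrinkings: a shrinking of a finite open cover $(F_i)_{i=1}^N$ of $X$ is a cover $(F'_i)_{i=1}^N$ of $X$ by open sets $F'_i\sqsubset F_i$ such that $F_I\neq\emptyset\Rightarrow F'_I:=\bigcap_{i\in I}F'_i\neq\emptyset$ for all $I$. A shrinking of a weak topological Kuranishi atlas $\mathcal K$ is a weak topological Kuranishi atlas $\mathcal K'$ with the same index set such that its footprint cover $(F'_i)$ is a shrinking of $(F_i)$, each chart is a restriction $\mathbf K'_I=\mathbf K_I|_{U'_I}$ to a precompact open $U'_I\sqsubset U_I$ with footprint $F'_I$, and each coordinate change $\widehat\Phi'_{IJ}$ is the restriction of $\widehat\Phi_{IJ}$ to the domain $U'_{IJ}:=U'_I\cap\phi_{IJ}^{-1}(U'_J)$. A tame shrinking is a shrinking which, with the filtration $\mathbb E'_{IJ}:=\mathbb E_{IJ}\cap\mathrm{pr}_J^{-1}(U'_J)$, is a tame topological Kuranishi atlas. *)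

theory Defs
  imports "HOL-Analysis.Analysis"
begin

text \<open>Charts are indexed by sets I of natural
numbers (subsets of {1..N}); all domains U_I live in one ambient type 'u, all
bundles E_I in one ambient type 'e (the disjoint union is tagged by I).
U_I is the topspace of kU K I, E_I the topspace of kE K I.\<close>

record ('x,'u,'e) katlas =
  kN    :: nat
  kF    :: "nat \<Rightarrow> 'x set"
  kU    :: "nat set \<Rightarrow> 'u topology"
  kE    :: "nat set \<Rightarrow> 'e topology"
  kpr   :: "nat set \<Rightarrow> 'e \<Rightarrow> 'u"
  kzero :: "nat set \<Rightarrow> 'u \<Rightarrow> 'e"
  ks    :: "nat set \<Rightarrow> 'u \<Rightarrow> 'e"
  kpsi  :: "nat set \<Rightarrow> 'u \<Rightarrow> 'x"
  kUIJ  :: "nat set \<Rightarrow> nat set \<Rightarrow> 'u set"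
  kPhi  :: "nat set \<Rightarrow> nat set \<Rightarrow> 'e \<Rightarrow> 'e"
  kphi  :: "nat set \<Rightarrow> nat set \<Rightarrow> 'u \<Rightarrow> 'u"
  kEE   :: "nat set \<Rightarrow> nat set \<Rightarrow> 'e set"

definition kfp :: "('x,'u,'e,'z) katlas_scheme \<Rightarrow> nat set \<Rightarrow> 'x set" where
  "kfp K I = (\<Inter>i\<in>I. kF K i)"

definition kIdx :: "('x,'u,'e,'z) katlas_scheme \<Rightarrow> nat set set" where
  "kIdx K = {I. I \<noteq> {} \<and> I \<subseteq> {1..kN K} \<and> kfp K I \<noteq> {}}"

definition kZ :: "('x,'u,'e,'z) katlas_scheme \<Rightarrow> nat set \<Rightarrow> 'u set" where
  "kZ K I = {x \<in> topspace (kU K I). ks K I x = kzero K I x}"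

definition kUU :: "('x,'u,'e,'z) katlas_scheme \<Rightarrow> nat set \<Rightarrow> nat set \<Rightarrow> 'u set" where
  "kUU K I J = (if I = J then topspace (kU K I) else kUIJ K I J)"

definition kph :: "('x,'u,'e,'z) katlas_scheme \<Rightarrow> nat set \<Rightarrow> nat set \<Rightarrow> 'u \<Rightarrow> 'u" where
  "kph K I J = (if I = J then id else kphi K I J)"

definition kUIJK :: "('x,'u,'e,'z) katlas_scheme \<Rightarrow> nat set \<Rightarrow> nat set \<Rightarrow> nat set \<Rightarrow> 'u set" where
  "kUIJK K I J L = {x \<in> kUIJ K I J. kphi K I J x \<in> kUIJ K J L}"

definition is_chart :: "'x topology \<Rightarrow> ('x,'u,'e,'z) katlas_scheme \<Rightarrow> nat set \<Rightarrow> 'x set \<Rightarrow> bool" where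
  "is_chart X K I F \<longleftrightarrow>
     metrizable_space (kU K I) \<and> separable_space (kU K I) \<and> locally_compact_space (kU K I) \<and>
     metrizable_space (kE K I) \<and> separable_space (kE K I) \<and> locally_compact_space (kE K I) \<and>
     continuous_map (kE K I) (kU K I) (kpr K I) \<and>
     continuous_map (kU K I) (kE K I) (kzero K I) \<and>
     (\<forall>x\<in>topspace (kU K I). kpr K I (kzero K I x) = x) \<and>
     continuous_map (kU K I) (kE K I) (ks K I) \<and>
     (\<forall>x\<in>topspace (kU K I). kpr K I (ks K I x) = x) \<and>
     openin X F \<and>
     homeomorphic_map (subtopology (kU K I) (kZ K I)) (subtopology X F) (kpsi K I)"

definition is_coord_change :: "('x,'u,'e,'z) katlas_scheme \<Rightarrow> nat set \<Rightarrow> nat set \<Rightarrow> bool" where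
  "is_coord_change K I J \<longleftrightarrow>
     openin (kU K I) (kUIJ K I J) \<and>
     kUIJ K I J \<inter> kZ K I = {x \<in> kZ K I. kpsi K I x \<in> kfp K I \<inter> kfp K J} \<and>
     embedding_map (subtopology (kE K I) {e \<in> topspace (kE K I). kpr K I e \<in> kUIJ K I J})
                   (kE K J) (kPhi K I J) \<and>
     embedding_map (subtopology (kU K I) (kUIJ K I J)) (kU K J) (kphi K I J) \<and>
     (\<forall>e\<in>topspace (kE K I). kpr K I e \<in> kUIJ K I J \<longrightarrow>
        kpr K J (kPhi K I J e) = kphi K I J (kpr K I e)) \<and>
     (\<forall>x\<in>kUIJ K I J. kzero K J (kphi K I J x) = kPhi K I J (kzero K I x) \<and>
                      ks K J (kphi K I J x) = kPhi K I J (ks K I x)) \<and>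
     (\<forall>x\<in>kUIJ K I J \<inter> kZ K I. kphi K I J x \<in> kZ K J \<and> kpsi K J (kphi K I J x) = kpsi K I x)"

definition weak_atlas :: "'x topology \<Rightarrow> ('x,'u,'e,'z) katlas_scheme \<Rightarrow> bool" where
  "weak_atlas X K \<longleftrightarrow>
     (\<forall>i\<in>{1..kN K}. is_chart X K {i} (kF K i)) \<and>
     (\<Union>i\<in>{1..kN K}. kF K i) = topspace X \<and>
     (\<forall>I\<in>kIdx K. is_chart X K I (kfp K I)) \<and>
     (\<forall>I\<in>kIdx K. \<forall>J\<in>kIdx K. I \<subset> J \<longrightarrow> is_coord_change K I J) \<and>
     (\<forall>I\<in>kIdx K. \<forall>J\<in>kIdx K. \<forall>L\<in>kIdx K. I \<subset> J \<and> J \<subset> L \<longrightarrow>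
        (\<forall>e\<in>topspace (kE K I). kpr K I e \<in> kUIJK K I J L \<inter> kUIJ K I L \<longrightarrow>
           kPhi K J L (kPhi K I J e) = kPhi K I L e))"

definition top_atlas :: "'x topology \<Rightarrow> ('x,'u,'e,'z) katlas_scheme \<Rightarrow> bool" where
  "top_atlas X K \<longleftrightarrow> weak_atlas X K \<and>
     (\<forall>I\<in>kIdx K. \<forall>J\<in>kIdx K. \<forall>L\<in>kIdx K. I \<subset> J \<and> J \<subset> L \<longrightarrow> kUIJK K I J L \<subseteq> kUIJ K I L)"

text \<open>Filtration E_IJ = kEE K I J (for J in the index set and I \<subseteq> J, including I = {}).\<close>
definition filtered :: "('x,'u,'e,'z) katlas_scheme \<Rightarrow> bool" where
  "filtered K \<longleftrightarrow>
     (\<forall>J\<in>kIdx K. \<forall>I. I \<subseteq> J \<longrightarrow> closedin (kE K J) (kEE K I J)) \<and>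
     (\<forall>J\<in>kIdx K. kEE K J J = topspace (kE K J) \<and> kEE K {} J = kzero K J ` topspace (kU K J)) \<and>
     (\<forall>J\<in>kIdx K. \<forall>L\<in>kIdx K. \<forall>I. I \<subseteq> J \<and> J \<subset> L \<longrightarrow>
        kPhi K J L ` {e \<in> kEE K I J. kpr K J e \<in> kUIJ K J L}
          = {e \<in> kEE K I L. kpr K L e \<in> kphi K J L ` kUIJ K J L}) \<and>
     (\<forall>J\<in>kIdx K. \<forall>I H. I \<subseteq> J \<and> H \<subseteq> J \<longrightarrow> kEE K I J \<inter> kEE K H J = kEE K (I \<inter> H) J) \<and>
     (\<forall>I\<in>kIdx K. \<forall>J\<in>kIdx K. I \<subset> J \<longrightarrow>
        openin (subtopology (kU K J) {x \<in> topspace (kU K J). ks K J x \<in> kEE K I J})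
               (kphi K I J ` kUIJ K I J))"

definition tame :: "('x,'u,'e,'z) katlas_scheme \<Rightarrow> bool" where
  "tame K \<longleftrightarrow>
     (\<forall>I\<in>kIdx K. \<forall>J\<in>kIdx K. \<forall>L\<in>kIdx K. I \<subseteq> J \<and> I \<subseteq> L \<longrightarrow>
        kUU K I J \<inter> kUU K I L = (if J \<union> L \<in> kIdx K then kUU K I (J \<union> L) else {})) \<and>
     (\<forall>I\<in>kIdx K. \<forall>J\<in>kIdx K. \<forall>L\<in>kIdx K. I \<subseteq> J \<and> J \<subseteq> L \<longrightarrow>
        kph K I J ` kUU K I L = {x \<in> kUU K J L. ks K J x \<in> kEE K I J})"

definition tame_atlas :: "'x topology \<Rightarrow> ('x,'u,'e,'z) katlas_scheme \<Rightarrow> bool" where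
  "tame_atlas X K \<longleftrightarrow> top_atlas X K \<and> filtered K \<and> tame K"

definition restrict_atlas :: "('x,'u,'e) katlas \<Rightarrow> (nat set \<Rightarrow> 'u set) \<Rightarrow> (nat \<Rightarrow> 'x set) \<Rightarrow> ('x,'u,'e) katlas" where
  "restrict_atlas K U' F' = K\<lparr>
     kF := F',
     kU := (\<lambda>I. subtopology (kU K I) (U' I)),
     kE := (\<lambda>I. subtopology (kE K I) {e \<in> topspace (kE K I). kpr K I e \<in> U' I}),
     kUIJ := (\<lambda>I J. {x \<in> kUIJ K I J. x \<in> U' I \<and> kphi K I J x \<in> U' J}),
     kEE := (\<lambda>I J. {e \<in> kEE K I J. kpr K J e \<in> U' J})\<rparr>"

definition fp_shrinking :: "'x topology \<Rightarrow> nat \<Rightarrow> (nat \<Rightarrow> 'x set) \<Rightarrow> (nat \<Rightarrow> 'x set) \<Rightarrow> bool" where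
  "fp_shrinking X N F F' \<longleftrightarrow>
     (\<forall>i\<in>{1..N}. openin X (F' i) \<and> F' i \<subseteq> F i \<and>
        compactin (subtopology X (F i)) ((subtopology X (F i)) closure_of (F' i))) \<and>
     (\<Union>i\<in>{1..N}. F' i) = topspace X \<and>
     (\<forall>I. I \<noteq> {} \<and> I \<subseteq> {1..N} \<and> (\<Inter>i\<in>I. F i) \<noteq> {} \<longrightarrow> (\<Inter>i\<in>I. F' i) \<noteq> {})"

definition shrinking :: "'x topology \<Rightarrow> ('x,'u,'e) katlas \<Rightarrow> (nat set \<Rightarrow> 'u set) \<Rightarrow> (nat \<Rightarrow> 'x set) \<Rightarrow> bool" where
  "shrinking X K U' F' \<longleftrightarrow>
     fp_shrinking X (kN K) (kF K) F' \<and>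
     (\<forall>I\<in>kIdx K. openin (kU K I) (U' I) \<and> U' I \<subseteq> topspace (kU K I) \<and>
        compactin (kU K I) ((kU K I) closure_of (U' I))) \<and>
     weak_atlas X (restrict_atlas K U' F')"

definition tame_shrinking :: "'x topology \<Rightarrow> ('x,'u,'e) katlas \<Rightarrow> (nat set \<Rightarrow> 'u set) \<Rightarrow> (nat \<Rightarrow> 'x set) \<Rightarrow> bool" where
  "tame_shrinking X K U' F' \<longleftrightarrow> shrinking X K U' F' \<and> tame_atlas X (restrict_atlas K U' F')"

text \<open>Virtual neighbourhood |K| as a set: quotient of the disjoint union of the U_I
by the equivalence relation generated by (I,x) ~ (J, phi_IJ x).\<close>
definition kcarrier :: "('x,'u,'e,'z) katlas_scheme \<Rightarrow> (nat set \<times> 'u) set" where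
  "kcarrier K = Sigma (kIdx K) (\<lambda>I. topspace (kU K I))"

definition kgen :: "('x,'u,'e,'z) katlas_scheme \<Rightarrow> ((nat set \<times> 'u) \<times> (nat set \<times> 'u)) set" where
  "kgen K = {((I, x), (J, kph K I J x)) | I J x.
              I \<in> kIdx K \<and> J \<in> kIdx K \<and> I \<subseteq> J \<and> x \<in> kUU K I J}"

definition krel :: "('x,'u,'e,'z) katlas_scheme \<Rightarrow> ((nat set \<times> 'u) \<times> (nat set \<times> 'u)) set" where
  "krel K = (kgen K \<union> (kgen K)\<inverse>)\<^sup>* \<inter> (kcarrier K \<times> kcarrier K)"

definition kvirt :: "('x,'u,'e,'z) katlas_scheme \<Rightarrow> (nat set \<times> 'u) set set" where
  "kvirt K = kcarrier K // krel K"

definition kpi :: "('x,'u,'e,'z) katlas_scheme \<Rightarrow> nat set \<times> 'u \<Rightarrow> (nat set \<times> 'u) set" where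
  "kpi K p = krel K `` {p}"

end

theory Submission imports Defs begin
lemma emb_top: "embedding_map X Y f \<Longrightarrow> x \<in> topspace X \<Longrightarrow> f x \<in> topspace Y"
  unfolding embedding_map_def
  by (metis continuous_map_image_subset_topspace homeomorphic_imp_continuous_map image_eqI image_subset_iff topspace_subtopology IntE)
lemma emb_inj: "embedding_map X Y f \<Longrightarrow> inj_on f (topspace X)"
  unfolding embedding_map_def by (rule homeomorphic_imp_injective_map)
lemma cm_top: "continuous_map X Y f \<Longrightarrow> x \<in> topspace X \<Longrightarrow> f x \<in> topspace Y"
  by (meson continuous_map_image_subset_topspace image_subset_iff)

lemma chartI: "tame_atlas X K \<Longrightarrow> I \<in> kIdx K \<Longrightarrow> is_chart X K I (kfp K I)"
  by (simp add: tame_atlas_def top_atlas_def weak_atlas_def)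
lemma ccI: "tame_atlas X K \<Longrightarrow> I \<in> kIdx K \<Longrightarrow> J \<in> kIdx K \<Longrightarrow> I \<subset> J \<Longrightarrow> is_coord_change K I J"
  by (simp add: tame_atlas_def top_atlas_def weak_atlas_def)
lemma tame1: "tame_atlas X K \<Longrightarrow> I\<in>kIdx K \<Longrightarrow> J\<in>kIdx K \<Longrightarrow> L\<in>kIdx K \<Longrightarrow> I \<subseteq> J \<Longrightarrow> I \<subseteq> L \<Longrightarrow>
        kUU K I J \<inter> kUU K I L = (if J \<union> L \<in> kIdx K then kUU K I (J \<union> L) else {})"
  by (simp add: tame_atlas_def tame_def)
lemma tame2: "tame_atlas X K \<Longrightarrow> I\<in>kIdx K \<Longrightarrow> J\<in>kIdx K \<Longrightarrow> L\<in>kIdx K \<Longrightarrow> I \<subseteq> J \<Longrightarrow> J \<subseteq> L \<Longrightarrow>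
        kph K I J ` kUU K I L = {x \<in> kUU K J L. ks K J x \<in> kEE K I J}"
  by (simp add: tame_atlas_def tame_def)
lemma filt3: "tame_atlas X K \<Longrightarrow> J\<in>kIdx K \<Longrightarrow> I \<subseteq> J \<Longrightarrow> H \<subseteq> J \<Longrightarrow> kEE K I J \<inter> kEE K H J = kEE K (I \<inter> H) J"
  by (simp add: tame_atlas_def filtered_def)
lemma filt0: "tame_atlas X K \<Longrightarrow> J\<in>kIdx K \<Longrightarrow> kEE K {} J = kzero K J ` topspace (kU K J)"
  by (simp add: tame_atlas_def filtered_def)

lemma UU_top: assumes "tame_atlas X K" "I\<in>kIdx K" "J\<in>kIdx K" "I \<subseteq> J"
  shows "kUU K I J \<subseteq> topspace (kU K I)"
proof (cases "I = J")
  case False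
  with assms have "is_coord_change K I J" by (intro ccI) auto
  then show ?thesis using False by (auto simp: kUU_def is_coord_change_def dest: openin_subset)
qed (simp add: kUU_def)

lemma ph_top: assumes "tame_atlas X K" "I\<in>kIdx K" "J\<in>kIdx K" "I \<subseteq> J" "x \<in> kUU K I J"
  shows "kph K I J x \<in> topspace (kU K J)"
proof (cases "I = J")
  case False
  with assms have c: "is_coord_change K I J" by (intro ccI) auto
  have "x \<in> topspace (subtopology (kU K I) (kUIJ K I J))"
    using assms False c by (auto simp: kUU_def is_coord_change_def dest: openin_subset)
  then show ?thesis using False c by (auto simp: kph_def is_coord_change_def intro: emb_top)
qed (use assms in \<open>simp add: kUU_def kph_def\<close>)

lemma ph_inj: assumes "tame_atlas X K" "I\<in>kIdx K" "J\<in>kIdx K" "I \<subseteq> J"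
  shows "inj_on (kph K I J) (kUU K I J)"
proof (cases "I = J")
  case False
  with assms have c: "is_coord_change K I J" by (intro ccI) auto
  have "topspace (subtopology (kU K I) (kUIJ K I J)) = kUIJ K I J"
    using c by (auto simp: is_coord_change_def dest: openin_subset)
  then show ?thesis using False c emb_inj[of "subtopology (kU K I) (kUIJ K I J)" "kU K J" "kphi K I J"]
    by (auto simp: kph_def kUU_def is_coord_change_def)
qed (simp add: kph_def)

lemma cocyc: assumes ta: "tame_atlas X K" and idx: "I\<in>kIdx K" "J\<in>kIdx K" "L\<in>kIdx K"
  and "I \<subseteq> J" "J \<subseteq> L" and x: "x \<in> kUU K I J" "kph K I J x \<in> kUU K J L"
  shows "x \<in> kUU K I L \<and> kph K I L x = kph K J L (kph K I J x)"
proof (cases "I = J \<or> J = L")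
  case True
  then show ?thesis
  proof
    assume "I = J" then show ?thesis using x by (simp add: kph_def kUU_def)
  next
    assume "J = L" then show ?thesis using x by (simp add: kph_def kUU_def)
  qed
next
  case False
  hence IJ: "I \<subset> J" and JL: "J \<subset> L" and IL: "I \<subset> L" using assms by auto
  have cIJ: "is_coord_change K I J" and cJL: "is_coord_change K J L" and cIL: "is_coord_change K I L"
    using ta idx IJ JL IL by (auto intro: ccI)
  have x1: "x \<in> kUIJ K I J" and x2: "kphi K I J x \<in> kUIJ K J L" using x False by (auto simp: kUU_def kph_def)
  have "x \<in> kUIJK K I J L" using x1 x2 by (simp add: kUIJK_def)
  moreover have "kUIJK K I J L \<subseteq> kUIJ K I L" using ta idx IJ JL by (simp add: tame_atlas_def top_atlas_def)
  ultimately have x3: "x \<in> kUIJ K I L" by blast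
  have xt: "x \<in> topspace (kU K I)" using x1 cIJ by (auto simp: is_coord_change_def dest: openin_subset)
  have chI: "is_chart X K I (kfp K I)" and chL: "is_chart X K L (kfp K L)" using ta idx by (auto intro: chartI)
  define e where "e = kzero K I x"
  have et: "e \<in> topspace (kE K I)" using chI xt unfolding e_def is_chart_def by (auto intro: cm_top)
  have pe: "kpr K I e = x" using chI xt unfolding e_def is_chart_def by auto
  have wc: "kPhi K J L (kPhi K I J e) = kPhi K I L e"
    using ta idx IJ JL et pe x3 \<open>x \<in> kUIJK K I J L\<close>
    unfolding tame_atlas_def top_atlas_def weak_atlas_def by blast
  have "kPhi K I J e = kzero K J (kphi K I J x)" using cIJ x1 unfolding e_def is_coord_change_def by auto
  moreover have "kPhi K J L (kzero K J (kphi K I J x)) = kzero K L (kphi K J L (kphi K I J x))"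
    using cJL x2 unfolding is_coord_change_def by auto
  moreover have "kPhi K I L e = kzero K L (kphi K I L x)" using cIL x3 unfolding e_def is_coord_change_def by auto
  ultimately have eq: "kzero K L (kphi K J L (kphi K I J x)) = kzero K L (kphi K I L x)" using wc by simp
  have t2: "x \<in> topspace (subtopology (kU K I) (kUIJ K I L))" using x3 xt by simp
  have "kphi K I L x \<in> topspace (kU K L)"
    using cIL t2 by (auto simp: is_coord_change_def intro: emb_top)
  moreover have "kphi K I J x \<in> topspace (subtopology (kU K J) (kUIJ K J L))"
    using cJL x2 by (auto simp: is_coord_change_def dest: openin_subset)
  hence "kphi K J L (kphi K I J x) \<in> topspace (kU K L)"
    using cJL by (auto simp: is_coord_change_def intro: emb_top)
  ultimately have "kphi K J L (kphi K I J x) = kphi K I L x"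
    using eq chL unfolding is_chart_def by metis
  then show ?thesis using x3 False IL by (auto simp: kUU_def kph_def)
qed
definition RR where
 "RR K p q \<longleftrightarrow> fst p \<in> kIdx K \<and> fst q \<in> kIdx K \<and> (\<exists>L\<in>kIdx K. fst p \<union> fst q \<subseteq> L \<and>
    snd p \<in> kUU K (fst p) L \<and> snd q \<in> kUU K (fst q) L \<and> kph K (fst p) L (snd p) = kph K (fst q) L (snd q))"

lemma RR_step:
  assumes ta: "tame_atlas X K" and pq: "(p, q) \<in> (kgen K \<union> (kgen K)\<inverse>)\<^sup>*" and p: "p \<in> kcarrier K"
  shows "RR K p q"
  using pq
proof (induction rule: rtrancl_induct)
  case base
  then show ?case using p by (cases p) (auto simp: RR_def kcarrier_def kUU_def kph_def)
next
  case (step b c)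
  obtain I x where pe: "p = (I, x)" by (cases p)
  obtain J y where be: "b = (J, y)" by (cases b)
  from step.IH obtain L where I: "I \<in> kIdx K" and J: "J \<in> kIdx K" and L: "L \<in> kIdx K"
     and sub: "I \<union> J \<subseteq> L" and xL: "x \<in> kUU K I L" and yL: "y \<in> kUU K J L"
     and eq: "kph K I L x = kph K J L y"
    unfolding RR_def pe be by auto
  from step.hyps(2) show ?case
  proof
    assume "(b, c) \<in> kgen K"
    then obtain J' where J': "J' \<in> kIdx K" "J \<subseteq> J'" and yJ': "y \<in> kUU K J J'" and ce: "c = (J', kph K J J' y)"
      unfolding kgen_def be by auto
    define L2 where "L2 = L \<union> J'"
    have tt: "kUU K J L \<inter> kUU K J J' = (if L \<union> J' \<in> kIdx K then kUU K J (L \<union> J') else {})"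
      using tame1[OF ta J L J'(1)] sub J' by auto
    have L2: "L2 \<in> kIdx K" and yL2: "y \<in> kUU K J L2"
      using tt yL yJ' unfolding L2_def by (auto split: if_splits)
    have "kph K J L y \<in> kUU K L L2"
      using tame2[OF ta J L L2] yL2 sub unfolding L2_def by auto
    hence "kph K I L x \<in> kUU K L L2" using eq by simp
    then have c1: "x \<in> kUU K I L2 \<and> kph K I L2 x = kph K L L2 (kph K I L x)"
      using cocyc[OF ta I L L2] sub xL unfolding L2_def by auto
    have c2: "kph K J L2 y = kph K L L2 (kph K J L y)"
      using cocyc[OF ta J L L2] sub yL \<open>kph K J L y \<in> kUU K L L2\<close> unfolding L2_def by auto
    have "kph K J J' y \<in> kUU K J' L2"
      using tame2[OF ta J J'(1) L2] yL2 J' unfolding L2_def by auto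
    then have c3: "kph K J' L2 (kph K J J' y) = kph K J L2 y"
      using cocyc[OF ta J J'(1) L2] J' yJ' unfolding L2_def by auto
    show ?thesis unfolding RR_def pe ce using I J' L2 c1 c2 c3 eq sub \<open>kph K J J' y \<in> kUU K J' L2\<close>
      unfolding L2_def by (intro conjI bexI[of _ "L \<union> J'"]) auto
  next
    assume "(b, c) \<in> (kgen K)\<inverse>"
    then obtain J' w where J': "J' \<in> kIdx K" "J' \<subseteq> J" and w: "w \<in> kUU K J' J" and ye: "y = kph K J' J w"
       and ce: "c = (J', w)"
      unfolding kgen_def be by auto
    have "w \<in> kUU K J' L \<and> kph K J' L w = kph K J L y"
      using cocyc[OF ta J'(1) J L] J' sub w ye yL by auto
    then show ?thesis unfolding RR_def pe ce using I J' L sub eq xL by (intro conjI bexI[of _ L]) auto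
  qed
qed

lemma krel_M:
  assumes ta: "tame_atlas X K" and r: "((I,x),(J,y)) \<in> krel K"
  shows "I \<in> kIdx K \<and> J \<in> kIdx K \<and> I \<union> J \<in> kIdx K \<and> x \<in> kUU K I (I \<union> J) \<and> y \<in> kUU K J (I \<union> J)
     \<and> kph K I (I \<union> J) x = kph K J (I \<union> J) y"
proof -
  have "RR K (I,x) (J,y)" using RR_step[OF ta] r unfolding krel_def by blast
  then obtain L where I: "I \<in> kIdx K" and J: "J \<in> kIdx K" and L: "L \<in> kIdx K"
     and sub: "I \<union> J \<subseteq> L" and xL: "x \<in> kUU K I L" and yL: "y \<in> kUU K J L"
     and eq: "kph K I L x = kph K J L y"
    unfolding RR_def by auto
  define M where "M = I \<union> J"
  have "kfp K L \<subseteq> kfp K M" using sub unfolding kfp_def M_def by auto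
  hence M: "M \<in> kIdx K" using I L sub unfolding kIdx_def M_def by auto
  have hML: "M \<union> L = L" using sub unfolding M_def by auto
  have xM: "x \<in> kUU K I M" using tame1[OF ta I M L] xL sub L hML unfolding M_def by auto
  have yM: "y \<in> kUU K J M" using tame1[OF ta J M L] yL sub L hML unfolding M_def by auto
  have a: "kph K I M x \<in> kUU K M L" using tame2[OF ta I M L] xL sub unfolding M_def by auto
  have b: "kph K J M y \<in> kUU K M L" using tame2[OF ta J M L] yL sub unfolding M_def by auto
  have "kph K M L (kph K I M x) = kph K M L (kph K J M y)"
    using cocyc[OF ta I M L] cocyc[OF ta J M L] xM yM a b sub eq unfolding M_def by auto
  then have "kph K I M x = kph K J M y"
    using ph_inj[OF ta M L] sub a b unfolding M_def by (auto dest: inj_onD)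
  then show ?thesis using I J M xM yM unfolding M_def by auto
qed
lemma ra_simps[simp]:
  "kN (restrict_atlas K U' F') = kN K"
  "kF (restrict_atlas K U' F') = F'"
  "kU (restrict_atlas K U' F') I = subtopology (kU K I) (U' I)"
  "kpr (restrict_atlas K U' F') = kpr K"
  "kzero (restrict_atlas K U' F') = kzero K"
  "ks (restrict_atlas K U' F') = ks K"
  "kpsi (restrict_atlas K U' F') = kpsi K"
  "kphi (restrict_atlas K U' F') = kphi K"
  "kPhi (restrict_atlas K U' F') = kPhi K"
  "kUIJ (restrict_atlas K U' F') I J = {x \<in> kUIJ K I J. x \<in> U' I \<and> kphi K I J x \<in> U' J}"
  "kEE (restrict_atlas K U' F') I J = {e \<in> kEE K I J. kpr K J e \<in> U' J}"
  by (simp_all add: restrict_atlas_def)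

lemma Idx_eq: assumes "shrinking X K U' F'" shows "kIdx (restrict_atlas K U' F') = kIdx K"
proof -
  have fs: "fp_shrinking X (kN K) (kF K) F'" using assms by (simp add: shrinking_def)
  have a: "(\<Inter>i\<in>I. F' i) \<noteq> {} \<longleftrightarrow> (\<Inter>i\<in>I. kF K i) \<noteq> {}" if "I \<noteq> {}" "I \<subseteq> {1..kN K}" for I
  proof
    assume "(\<Inter>i\<in>I. F' i) \<noteq> {}"
    moreover have "(\<Inter>i\<in>I. F' i) \<subseteq> (\<Inter>i\<in>I. kF K i)" using fs that unfolding fp_shrinking_def by blast
    ultimately show "(\<Inter>i\<in>I. kF K i) \<noteq> {}" by blast
  next
    assume "(\<Inter>i\<in>I. kF K i) \<noteq> {}"
    then show "(\<Inter>i\<in>I. F' i) \<noteq> {}" using fs that unfolding fp_shrinking_def by blast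
  qed
  show ?thesis unfolding kIdx_def kfp_def using a by auto
qed

lemma UU_sub: fixes K :: "('x,'u,'e) katlas" shows "kUU (restrict_atlas K U' F') I J \<subseteq> kUU K I J"
  by (auto simp: kUU_def)

lemma ph_eq[simp]: fixes K :: "('x,'u,'e) katlas" shows "kph (restrict_atlas K U' F') = kph K"
  by (intro ext) (simp add: kph_def)

lemma gen_sub: "shrinking X K U' F' \<Longrightarrow> kgen (restrict_atlas K U' F') \<subseteq> kgen K"
  using Idx_eq[of X K U' F'] UU_sub[of K U' F'] unfolding kgen_def by fastforce

lemma carr_sub: "shrinking X K U' F' \<Longrightarrow> kcarrier (restrict_atlas K U' F') \<subseteq> kcarrier K"
  using Idx_eq[of X K U' F'] unfolding kcarrier_def by auto

lemma krel_sub: assumes "shrinking X K U' F'" shows "krel (restrict_atlas K U' F') \<subseteq> krel K"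
proof -
  have "kgen (restrict_atlas K U' F') \<union> (kgen (restrict_atlas K U' F'))\<inverse> \<subseteq> kgen K \<union> (kgen K)\<inverse>"
    using gen_sub[OF assms] by auto
  then have "(kgen (restrict_atlas K U' F') \<union> (kgen (restrict_atlas K U' F'))\<inverse>)\<^sup>* \<subseteq> (kgen K \<union> (kgen K)\<inverse>)\<^sup>*"
    by (rule rtrancl_mono)
  then show ?thesis using carr_sub[OF assms] unfolding krel_def by blast
qed

lemma two_up: "(c,p) \<in> S \<Longrightarrow> (c,q) \<in> S \<Longrightarrow> (p,q) \<in> (S \<union> S\<inverse>)\<^sup>*"
  by (meson Un_iff converse_iff r_into_rtrancl rtrancl_trans)
lemma two_down: "(p,c) \<in> S \<Longrightarrow> (q,c) \<in> S \<Longrightarrow> (p,q) \<in> (S \<union> S\<inverse>)\<^sup>*"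
  by (meson Un_iff converse_iff r_into_rtrancl rtrancl_trans)
lemma main_inj:
  fixes K :: "('x,'u,'e) katlas"
  assumes ta: "tame_atlas X K" and ts: "tame_shrinking X K U' F'"
    and p: "(I,x) \<in> kcarrier (restrict_atlas K U' F')" and q: "(J,y) \<in> kcarrier (restrict_atlas K U' F')"
    and r: "((I,x),(J,y)) \<in> krel K"
  shows "((I,x),(J,y)) \<in> krel (restrict_atlas K U' F')"
proof -
  define K' where "K' = restrict_atlas K U' F'"
  have sh: "shrinking X K U' F'" and ta': "tame_atlas X K'" using ts by (auto simp: tame_shrinking_def K'_def)
  have IdxE: "kIdx K' = kIdx K" using Idx_eq[OF sh] by (simp add: K'_def)
  have phE: "kph K' = kph K" by (simp add: K'_def)
  have UUs: "kUU K' A B \<subseteq> kUU K A B" for A B using UU_sub[of K U' F'] by (simp add: K'_def)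
  from krel_M[OF ta r] obtain M where I: "I \<in> kIdx K" and J: "J \<in> kIdx K" and M: "M \<in> kIdx K" and Me: "M = I \<union> J"
    and xM: "x \<in> kUU K I M" and yM: "y \<in> kUU K J M" and zeq: "kph K I M x = kph K J M y" by blast
  define z where "z = kph K I M x"
  have IM: "I \<subseteq> M" and JM: "J \<subseteq> M" using Me by auto
  have xt: "x \<in> topspace (kU K I)" and xU: "x \<in> U' I" and yt: "y \<in> topspace (kU K J)" and yU: "y \<in> U' J"
    using p q by (auto simp: kcarrier_def)
  have xt': "x \<in> kUU K' I I" and yt': "y \<in> kUU K' J J" using xt xU yt yU by (auto simp: kUU_def K'_def)
  have pc: "(I,x) \<in> kcarrier K'" and qc: "(J,y) \<in> kcarrier K'" using p q by (simp_all add: K'_def)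
  have sI: "ks K M z \<in> kEE K I M" and zMM: "z \<in> kUU K M M"
    using tame2[OF ta I M M] xM IM unfolding z_def by blast+
  have sJ: "ks K M z \<in> kEE K J M"
    using tame2[OF ta J M M] yM JM unfolding z_def zeq by blast
  have sH: "ks K M z \<in> kEE K (I \<inter> J) M" using filt3[OF ta M IM JM] sI sJ by blast
  show ?thesis
  proof (cases "I \<inter> J = {}")
    case False
    define H where "H = I \<inter> J"
    have "kfp K I \<subseteq> kfp K H" unfolding kfp_def H_def by auto
    hence H: "H \<in> kIdx K" using I False unfolding kIdx_def H_def by auto
    have HI: "H \<subseteq> I" and HJ: "H \<subseteq> J" and HM: "H \<subseteq> M" using Me by (auto simp: H_def)
    obtain w where wHM: "w \<in> kUU K H M" and wz: "kph K H M w = z"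
      using tame2[OF ta H M M] zMM sH HM unfolding H_def[symmetric] by (metis (no_types, lifting) mem_Collect_eq image_iff order_refl)
    have gen: "w \<in> kUU K H A \<and> kph K H A w = a \<and> w \<in> kUU K' H A"
      if A: "A \<in> kIdx K" "H \<subseteq> A" "A \<subseteq> M" and aM: "a \<in> kUU K A M" and az: "kph K A M a = z"
        and aU: "a \<in> kUU K' A A" and at: "a \<in> topspace (kU K A)" for A a
    proof -
      have AM: "A \<union> M = M" using A by auto
      have wA: "w \<in> kUU K H A" using tame1[OF ta H A(1) M] A wHM AM M HM by auto
      have "kph K H A w \<in> kUU K A M" using tame2[OF ta H A(1) M] A wHM by auto
      hence "kph K A M (kph K H A w) = kph K H M w" using cocyc[OF ta H A(1) M] A wA by auto
      hence wa: "kph K H A w = a" using ph_inj[OF ta A(1) M A(3)] aM az wz \<open>kph K H A w \<in> kUU K A M\<close>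
        by (auto dest: inj_onD)
      have "ks K A a \<in> kEE K H A" using tame2[OF ta H A(1) A(1)] wA A wa by auto
      moreover have "kpr K A (ks K A a) = a" using chartI[OF ta A(1)] at unfolding is_chart_def by auto
      moreover have "a \<in> U' A" using aU by (auto simp: kUU_def K'_def)
      ultimately have "ks K' A a \<in> kEE K' H A" by (simp add: K'_def)
      hence "a \<in> kph K' H A ` kUU K' H A"
        using tame2[OF ta' _ _ _ A(2) order_refl] A(1) H aU IdxE by auto
      then obtain w' where w': "w' \<in> kUU K' H A" "kph K H A w' = a" using phE by auto
      have "w' = w" using ph_inj[OF ta H A(1) A(2)] w' wA wa UUs by (auto dest: inj_onD)
      then show ?thesis using wA wa w' by auto
    qed
    have gI: "w \<in> kUU K' H I \<and> kph K H I w = x"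
      using gen[OF I HI IM xM _ xt' xt] z_def by auto
    have gJ: "w \<in> kUU K' H J \<and> kph K H J w = y"
      using gen[OF J HJ JM yM _ yt' yt] z_def zeq by auto
    have "((H,w),(I,x)) \<in> kgen K'" "((H,w),(J,y)) \<in> kgen K'"
      unfolding kgen_def using gI gJ H I J HI HJ IdxE phE by (auto intro!: exI[of _ H])
    then have "((I,x),(J,y)) \<in> (kgen K' \<union> (kgen K')\<inverse>)\<^sup>*" by (rule two_up)
    then show ?thesis using pc qc unfolding krel_def K'_def by auto
  next
    case True
    have chM: "is_chart X K M (kfp K M)" using chartI[OF ta M] .
    have zt: "z \<in> topspace (kU K M)" using zMM by (simp add: kUU_def)
    obtain u where u: "u \<in> topspace (kU K M)" "ks K M z = kzero K M u"
      using sH filt0[OF ta M] True by auto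
    have "kpr K M (ks K M z) = z" "kpr K M (kzero K M u) = u" using chM zt u(1) unfolding is_chart_def by auto
    hence zZ: "ks K M z = kzero K M z" using u by simp
    have IJne: "I \<noteq> {}" "J \<noteq> {}" using I J by (auto simp: kIdx_def)
    have fp: "kpsi K A a = kpsi K M z \<and> kpsi K A a \<in> kfp K' A \<and> a \<in> kZ K' A \<and> a \<in> kUIJ K A M"
      if A: "A \<in> kIdx K" "A \<subset> M" and aM: "a \<in> kUU K A M" and az: "kph K A M a = z"
        and at: "a \<in> topspace (kU K A)" and aU: "a \<in> U' A" for A a
    proof -
      have c: "is_coord_change K A M" using ccI[OF ta A(1) M A(2)] .
      have chA: "is_chart X K A (kfp K A)" using chartI[OF ta A(1)] .
      have AMne: "A \<noteq> M" using A(2) by blast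
      have a1: "a \<in> kUIJ K A M" and a2: "kphi K A M a = z" using aM az AMne by (auto simp: kUU_def kph_def)
      define D where "D = {e \<in> topspace (kE K A). kpr K A e \<in> kUIJ K A M}"
      have inj: "inj_on (kPhi K A M) D"
        using emb_inj[of "subtopology (kE K A) D" "kE K M" "kPhi K A M"] c unfolding is_coord_change_def D_def
        by (simp add: Int_absorb1 subsetI)
      have sD: "ks K A a \<in> D" and zD: "kzero K A a \<in> D"
        using chA at a1 unfolding is_chart_def D_def by (auto intro: cm_top)
      have "kPhi K A M (ks K A a) = ks K M z" "kPhi K A M (kzero K A a) = kzero K M z"
        using c a1 a2 unfolding is_coord_change_def by auto
      hence "ks K A a = kzero K A a" using inj sD zD zZ by (metis inj_onD)
      hence aZ: "a \<in> kZ K A" using at by (simp add: kZ_def)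
      hence ps: "kpsi K A a = kpsi K M z" using c a1 a2 unfolding is_coord_change_def by auto
      have aZ': "a \<in> kZ K' A" using aZ aU by (simp add: kZ_def K'_def)
      have chA': "is_chart X K' A (kfp K' A)" using chartI[OF ta'] A(1) IdxE by simp
      have "a \<in> topspace (subtopology (kU K' A) (kZ K' A))" using aZ' by (simp add: kZ_def)
      hence "kpsi K' A a \<in> topspace (subtopology X (kfp K' A))"
        using chA' unfolding is_chart_def by (meson cm_top homeomorphic_imp_continuous_map)
      hence "kpsi K A a \<in> kfp K' A" by (simp add: K'_def)
      then show ?thesis using ps aZ' a1 by simp
    qed
    have IM': "I \<subset> M" and JM': "J \<subset> M" using Me True IJne by auto
    have fI: "kpsi K I x = kpsi K M z \<and> kpsi K I x \<in> kfp K' I \<and> x \<in> kZ K' I \<and> x \<in> kUIJ K I M"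
      using fp[OF I IM' xM z_def[symmetric] xt xU] .
    have fJ: "kpsi K J y = kpsi K M z \<and> kpsi K J y \<in> kfp K' J \<and> y \<in> kZ K' J \<and> y \<in> kUIJ K J M"
      by (rule fp[OF J JM' yM _ yt yU]) (simp add: z_def zeq)
    have fpM: "kfp K' M = kfp K' I \<inter> kfp K' J" unfolding kfp_def Me by auto
    have zU: "z \<in> U' M"
    proof -
      have "is_coord_change K' I M" using ccI[OF ta'] I M IM' IdxE by simp
      hence "x \<in> kUIJ K' I M" using fI fJ fpM unfolding is_coord_change_def by (auto simp: K'_def)
      moreover have "I \<noteq> M" using IM' by blast
      ultimately show ?thesis using z_def by (simp add: K'_def kph_def)
    qed
    have neq: "I \<noteq> M" "J \<noteq> M" using IM' JM' by blast+
    have "x \<in> kUU K' I M" "y \<in> kUU K' J M"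
      using fI fJ neq xU yU zU z_def zeq by (auto simp: kUU_def kph_def K'_def)
    hence "((I,x),(M,z)) \<in> kgen K'" "((J,y),(M,z)) \<in> kgen K'"
      unfolding kgen_def using I J M IM JM IdxE phE z_def zeq by auto
    then have "((I,x),(J,y)) \<in> (kgen K' \<union> (kgen K')\<inverse>)\<^sup>*" by (rule two_down)
    then show ?thesis using pc qc unfolding krel_def K'_def by auto
  qed
qed
lemma krel_sym: "(p,q) \<in> krel K \<Longrightarrow> (q,p) \<in> krel K"
proof -
  assume a: "(p,q) \<in> krel K"
  have "(q,p) \<in> ((kgen K \<union> (kgen K)\<inverse>)\<^sup>*)\<inverse>" using a unfolding krel_def by auto
  hence "(q,p) \<in> ((kgen K \<union> (kgen K)\<inverse>)\<inverse>)\<^sup>*" by (simp add: rtrancl_converse)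
  moreover have "(kgen K \<union> (kgen K)\<inverse>)\<inverse> = kgen K \<union> (kgen K)\<inverse>" by auto
  ultimately show ?thesis using a unfolding krel_def by auto
qed

lemma krel_trans: "(p,q) \<in> krel K \<Longrightarrow> (q,r) \<in> krel K \<Longrightarrow> (p,r) \<in> krel K"
  unfolding krel_def by (auto intro: rtrancl_trans)

lemma krel_refl: "p \<in> kcarrier K \<Longrightarrow> (p,p) \<in> krel K"
  unfolding krel_def by auto

lemma kpi_eq: "(p,q) \<in> krel K \<Longrightarrow> kpi K q = kpi K p"
  unfolding kpi_def by (auto intro: krel_trans krel_sym)

theorem mainTheorem12:
  fixes X :: "'x topology" and K :: "('x,'u,'e) katlas"
    and U' :: "nat set \<Rightarrow> 'u set" and F' :: "nat \<Rightarrow> 'x set"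
  assumes "compact_space X" and "metrizable_space X"
    and "tame_atlas X K"
    and "tame_shrinking X K U' F'"
  shows "\<exists>\<iota>. (\<forall>p\<in>kcarrier (restrict_atlas K U' F').
                 \<iota> (kpi (restrict_atlas K U' F') p) = kpi K p)
            \<and> inj_on \<iota> (kvirt (restrict_atlas K U' F'))"
proof -
  define K' where "K' = restrict_atlas K U' F'"
  have sh: "shrinking X K U' F'" using assms(4) by (simp add: tame_shrinking_def)
  have sub: "krel K' \<subseteq> krel K" using krel_sub[OF sh] by (simp add: K'_def)
  define \<iota> where "\<iota> = (\<lambda>A. kpi K (SOME p. p \<in> A))"
  have e: "\<iota> (kpi K' p) = kpi K p" if p: "p \<in> kcarrier K'" for p
  proof -
    have "p \<in> kpi K' p" using krel_refl[OF p] by (simp add: kpi_def)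
    hence "(SOME q. q \<in> kpi K' p) \<in> kpi K' p" by (rule someI)
    hence "(p, SOME q. q \<in> kpi K' p) \<in> krel K" using sub by (auto simp: kpi_def)
    thus ?thesis unfolding \<iota>_def by (rule kpi_eq)
  qed
  have "inj_on \<iota> (kvirt K')"
  proof (rule inj_onI)
    fix A B assume A: "A \<in> kvirt K'" and B: "B \<in> kvirt K'" and eq: "\<iota> A = \<iota> B"
    obtain p where p: "p \<in> kcarrier K'" "A = kpi K' p" using A unfolding kvirt_def kpi_def by (auto elim: quotientE)
    obtain q where q: "q \<in> kcarrier K'" "B = kpi K' q" using B unfolding kvirt_def kpi_def by (auto elim: quotientE)
    have "kpi K p = kpi K q" using eq e p q by simp
    moreover have "q \<in> kpi K q" using krel_refl[of q K] q(1) carr_sub[OF sh] by (auto simp: kpi_def K'_def)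
    ultimately have "q \<in> kpi K p" by simp
    hence "(p,q) \<in> krel K" by (simp add: kpi_def)
    then obtain I x J y where pe: "p = (I,x)" and qe: "q = (J,y)" by (cases p, cases q) auto
    have "(p,q) \<in> krel K'" using main_inj[OF assms(3) assms(4)] p(1) q(1) \<open>(p,q) \<in> krel K\<close>
      unfolding pe qe K'_def by blast
    then show "A = B" using p q kpi_eq[of q p K'] krel_sym by metis
  qed
  then show ?thesis using e unfolding K'_def by blast
qed
end
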